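(* Let $(\mathcal X,R)$ be a quantum poset and let $\mathcal W$ be any quantum set. Then the relation $\sqsubseteq$ on the set $\mathbf{qSet}(\mathcal W,\mathcal X)$ of functions $\mathcal W\to\mathcal X$, defined by $F\sqsubseteq G$ iff $G\le R\circ F$, is a partial order (reflexive, transitive and antisymmetric).
   Context: A quantum set $\mathcal X$ is a set $\mathrm{At}(\mathcal X)$ of nonzero finite-dimensional Hilbert spaces, called its atoms. A (binary) relation $R$ from a quantum set $\mathcal X$ to a quantum set $\mathcal Y$ is a choice of a linear subspace $R(X,Y)\subseteq L(X,Y)$ for every $X\in\mathrm{At}(\mathcal X)$, $Y\in\mathrm{At}(\mathcal Y)$. Composition: $(S\circ R)(X,Z)=\mathrm{span}\{sr: r\in R(X,Y),\ s\in S(Y,Z),\ Y\in\mathrm{At}(\mathcal Y)\}$. Identity: $I_{\mathcal X}(X,X)=\mathbb C\cdot 1_X$ and $I_{\mathcal X}(X,X')=0$ for $X\ne X'$. Adjoint: $R^\dagger(Y,X)=\{r^\dagger : r\in R(X,Y)\}$. Order: $R\le S$ iff $R(X,Y)\subseteq S(X,Y)$ for all atoms $X,Y$; meets $\wedge$ (also infinite) are entrywise intersections. A function $F:\mathcal X\to\mathcal Y$ is a relation from $\mathcal X$ to $\mathcal Y$ with $F\circ F^\dagger\le I_{\mathcal Y}$ and $F^\dagger\circ F\ge I_{\mathcal X}$; quantum sets and functions form the category $\mathbf{qSet}$. A quantum poset is a pair $(\mathcal X,R)$ with $R$ a relation from $\mathcal X$ to $\mathcal X$ satisfying $I_{\mathcal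 X}\le R$, $R\circ R\le R$, and $R\wedge R^\dagger\le I_{\mathcal X}$. *)

theory Defs
  imports Complex_Main "Jordan_Normal_Form.Matrix"
begin

text \<open>A quantum set is given by an index set of atoms A together with a dimension
  function d; atom x is the Hilbert space of complex dimension d x (with its standard
  inner product). A linear map from atom x to atom y is a (d y) x (d x) complex matrix.\<close>

definition qset :: "'x set \<Rightarrow> ('x \<Rightarrow> nat) \<Rightarrow> bool" where
  "qset A d \<longleftrightarrow> (\<forall>x\<in>A. 0 < d x)"

definition is_subspace :: "nat \<Rightarrow> nat \<Rightarrow> complex mat set \<Rightarrow> bool" where
  "is_subspace n m V \<longleftrightarrow> V \<subseteq> carrier_mat n m \<and> 0\<^sub>m n m \<in> V
     \<and> (\<forall>a\<in>V. \<forall>b\<in>V. a + b \<in> V) \<and> (\<forall>c. \<forall>a\<in>V. c \<cdot>\<^sub>m a \<in> V)"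

definition cspan :: "nat \<Rightarrow> nat \<Rightarrow> complex mat set \<Rightarrow> complex mat set" where
  "cspan n m S = \<Inter>{V. is_subspace n m V \<and> S \<subseteq> V}"

definition adj :: "complex mat \<Rightarrow> complex mat" where
  "adj M = mat (dim_col M) (dim_row M) (\<lambda>(i,j). cnj (M $$ (j,i)))"

text \<open>A relation from (A,dA) to (B,dB): R x y is a subspace of L(x,y) for atoms
  x, y; off the atoms it is empty (so that equality of relations is entrywise equality
  on atoms).\<close>
definition qrel :: "'x set \<Rightarrow> ('x \<Rightarrow> nat) \<Rightarrow> 'y set \<Rightarrow> ('y \<Rightarrow> nat)
     \<Rightarrow> ('x \<Rightarrow> 'y \<Rightarrow> complex mat set) \<Rightarrow> bool" where
  "qrel A dA B dB R \<longleftrightarrow>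
     (\<forall>x\<in>A. \<forall>y\<in>B. is_subspace (dB y) (dA x) (R x y))
     \<and> (\<forall>x y. (x \<notin> A \<or> y \<notin> B) \<longrightarrow> R x y = {})"

definition qcomp :: "'x set \<Rightarrow> ('x \<Rightarrow> nat) \<Rightarrow> 'y set \<Rightarrow> 'z set \<Rightarrow> ('z \<Rightarrow> nat)
     \<Rightarrow> ('y \<Rightarrow> 'z \<Rightarrow> complex mat set) \<Rightarrow> ('x \<Rightarrow> 'y \<Rightarrow> complex mat set)
     \<Rightarrow> ('x \<Rightarrow> 'z \<Rightarrow> complex mat set)" where
  "qcomp A dA B C dC S R = (\<lambda>x z. if x \<in> A \<and> z \<in> C then
      cspan (dC z) (dA x) {s * r | s r y. y \<in> B \<and> r \<in> R x y \<and> s \<in> S y z} else {})"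

definition qid :: "'x set \<Rightarrow> ('x \<Rightarrow> nat) \<Rightarrow> ('x \<Rightarrow> 'x \<Rightarrow> complex mat set)" where
  "qid A d = (\<lambda>x x'. if x \<in> A \<and> x' \<in> A then
      (if x = x' then {c \<cdot>\<^sub>m 1\<^sub>m (d x) | c. True} else {0\<^sub>m (d x') (d x)}) else {})"

definition qadj :: "('x \<Rightarrow> 'y \<Rightarrow> complex mat set) \<Rightarrow> ('y \<Rightarrow> 'x \<Rightarrow> complex mat set)" where
  "qadj R = (\<lambda>y x. adj ` R x y)"

definition qle :: "'x set \<Rightarrow> 'y set \<Rightarrow> ('x \<Rightarrow> 'y \<Rightarrow> complex mat set)
     \<Rightarrow> ('x \<Rightarrow> 'y \<Rightarrow> complex mat set) \<Rightarrow> bool" where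
  "qle A B R S \<longleftrightarrow> (\<forall>x\<in>A. \<forall>y\<in>B. R x y \<subseteq> S x y)"

definition qmeet :: "('x \<Rightarrow> 'y \<Rightarrow> complex mat set) \<Rightarrow> ('x \<Rightarrow> 'y \<Rightarrow> complex mat set)
     \<Rightarrow> ('x \<Rightarrow> 'y \<Rightarrow> complex mat set)" where
  "qmeet R S = (\<lambda>x y. R x y \<inter> S x y)"

definition qfun :: "'x set \<Rightarrow> ('x \<Rightarrow> nat) \<Rightarrow> 'y set \<Rightarrow> ('y \<Rightarrow> nat)
     \<Rightarrow> ('x \<Rightarrow> 'y \<Rightarrow> complex mat set) \<Rightarrow> bool" where
  "qfun A dA B dB F \<longleftrightarrow> qrel A dA B dB F
     \<and> qle B B (qcomp B dB A B dB F (qadj F)) (qid B dB)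
     \<and> qle A A (qid A dA) (qcomp A dA B A dA (qadj F) F)"

definition qfuns :: "'x set \<Rightarrow> ('x \<Rightarrow> nat) \<Rightarrow> 'y set \<Rightarrow> ('y \<Rightarrow> nat)
     \<Rightarrow> ('x \<Rightarrow> 'y \<Rightarrow> complex mat set) set" where
  "qfuns A dA B dB = {F. qfun A dA B dB F}"

definition qposet :: "'x set \<Rightarrow> ('x \<Rightarrow> nat) \<Rightarrow> ('x \<Rightarrow> 'x \<Rightarrow> complex mat set) \<Rightarrow> bool" where
  "qposet A d R \<longleftrightarrow> qset A d \<and> qrel A d A d R
     \<and> qle A A (qid A d) R
     \<and> qle A A (qcomp A d A A d R R) R
     \<and> qle A A (qmeet R (qadj R)) (qid A d)"

definition fun_order :: "'w set \<Rightarrow> ('w \<Rightarrow> nat) \<Rightarrow> 'x set \<Rightarrow> ('x \<Rightarrow> nat)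
     \<Rightarrow> ('x \<Rightarrow> 'x \<Rightarrow> complex mat set)
     \<Rightarrow> (('w \<Rightarrow> 'x \<Rightarrow> complex mat set) \<times> ('w \<Rightarrow> 'x \<Rightarrow> complex mat set)) set" where
  "fun_order W dW X dX R = {(F, G). F \<in> qfuns W dW X dX \<and> G \<in> qfuns W dW X dX
       \<and> qle W X G (qcomp W dW X X dX R F)}"

end

theory Submission
  imports Defs
begin

lemma cspan_least: "is_subspace n m V \<Longrightarrow> S \<subseteq> V \<Longrightarrow> cspan n m S \<subseteq> V"
  unfolding cspan_def by blast

lemma cspan_inc: "S \<subseteq> cspan n m S"
  unfolding cspan_def by blast

lemma carrier_subspace: "is_subspace n m (carrier_mat n m)"
  unfolding is_subspace_def by auto

lemma cspan_subspace: assumes "S \<subseteq> carrier_mat n m" shows "is_subspace n m (cspan n m S)"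
proof -
  define F where "F = {V. is_subspace n m V \<and> S \<subseteq> V}"
  have ne: "carrier_mat n m \<in> F" using assms carrier_subspace unfolding F_def by blast
  have all: "\<And>V. V \<in> F \<Longrightarrow> is_subspace n m V" unfolding F_def by blast
  have eq: "cspan n m S = \<Inter> F" unfolding cspan_def F_def ..
  show ?thesis unfolding eq is_subspace_def
  proof (intro conjI)
    show "\<Inter> F \<subseteq> carrier_mat n m" using Inter_lower[OF ne] .
    show "0\<^sub>m n m \<in> \<Inter> F" using all unfolding is_subspace_def by blast
    show "\<forall>a\<in>\<Inter> F. \<forall>b\<in>\<Inter> F. a + b \<in> \<Inter> F" using all unfolding is_subspace_def by blast
    show "\<forall>c. \<forall>a\<in>\<Inter> F. c \<cdot>\<^sub>m a \<in> \<Inter> F" using all unfolding is_subspace_def by blast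
  qed
qed

lemma left_mult_span:
  assumes A: "A \<in> carrier_mat k n" and V: "is_subspace k m V"
    and S: "S \<subseteq> carrier_mat n m" and gen: "\<And>s. s \<in> S \<Longrightarrow> A * s \<in> V"
    and M: "M \<in> cspan n m S"
  shows "A * M \<in> V"
proof -
  let ?U = "{M \<in> carrier_mat n m. A * M \<in> V}"
  have "is_subspace n m ?U"
    unfolding is_subspace_def
  proof (intro conjI allI ballI)
    show "?U \<subseteq> carrier_mat n m" by blast
    show "0\<^sub>m n m \<in> ?U" using A V right_mult_zero_mat[OF A] unfolding is_subspace_def by auto
  next
    fix a b assume a: "a \<in> ?U" and b: "b \<in> ?U"
    then show "a + b \<in> ?U" using V mult_add_distrib_mat[of A k n a m b] A unfolding is_subspace_def by auto
  next
    fix c a assume a: "a \<in> ?U"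
    then show "c \<cdot>\<^sub>m a \<in> ?U" using V mult_smult_distrib[of A k n a m c] A unfolding is_subspace_def by auto
  qed
  moreover have "S \<subseteq> ?U" using S gen by blast
  ultimately show ?thesis using cspan_least M by blast
qed

lemma right_mult_span:
  assumes B: "B \<in> carrier_mat m k" and V: "is_subspace n k V"
    and S: "S \<subseteq> carrier_mat n m" and gen: "\<And>s. s \<in> S \<Longrightarrow> s * B \<in> V"
    and M: "M \<in> cspan n m S"
  shows "M * B \<in> V"
proof -
  let ?U = "{M \<in> carrier_mat n m. M * B \<in> V}"
  have "is_subspace n m ?U"
    unfolding is_subspace_def
  proof (intro conjI allI ballI)
    show "?U \<subseteq> carrier_mat n m" by blast
    show "0\<^sub>m n m \<in> ?U" using B V left_mult_zero_mat[OF B] unfolding is_subspace_def by auto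
  next
    fix a b assume a: "a \<in> ?U" and b: "b \<in> ?U"
    then show "a + b \<in> ?U" using V add_mult_distrib_mat[of a n m b B k] B unfolding is_subspace_def by auto
  next
    fix c a assume a: "a \<in> ?U"
    then show "c \<cdot>\<^sub>m a \<in> ?U" using V mult_smult_assoc_mat[of a n m B k c] B unfolding is_subspace_def by auto
  qed
  moreover have "S \<subseteq> ?U" using S gen by blast
  ultimately show ?thesis using cspan_least M by blast
qed

lemma adj_carrier: "A \<in> carrier_mat n m \<Longrightarrow> adj A \<in> carrier_mat m n"
  unfolding adj_def carrier_mat_def by auto

lemma adj_adj: "adj (adj A) = A"
  unfolding adj_def by (intro eq_matI) auto

lemma adj_mult: assumes "A \<in> carrier_mat n k" "B \<in> carrier_mat k m"
  shows "adj (A * B) = adj B * adj A"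
  using assms unfolding adj_def
  by (intro eq_matI) (auto simp: scalar_prod_def sum_distrib_left mult.commute intro!: sum.cong)


lemma qrel_sub: "qrel A dA B dB R \<Longrightarrow> x \<in> A \<Longrightarrow> y \<in> B \<Longrightarrow> is_subspace (dB y) (dA x) (R x y)"
  unfolding qrel_def by blast

lemma qrel_carrier: "qrel A dA B dB R \<Longrightarrow> x \<in> A \<Longrightarrow> y \<in> B \<Longrightarrow> r \<in> R x y \<Longrightarrow> r \<in> carrier_mat (dB y) (dA x)"
proof -
  assume a: "qrel A dA B dB R" "x \<in> A" "y \<in> B" "r \<in> R x y"
  have "R x y \<subseteq> carrier_mat (dB y) (dA x)" using qrel_sub[OF a(1-3)] unfolding is_subspace_def by (elim conjE)
  then show ?thesis using a(4) by (rule subsetD)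
qed

lemma qcomp_eq: "x \<in> A \<Longrightarrow> z \<in> C \<Longrightarrow> qcomp A dA B C dC S R x z =
   cspan (dC z) (dA x) {s * r | s r y. y \<in> B \<and> r \<in> R x y \<and> s \<in> S y z}"
  unfolding qcomp_def by (rule if_P) (rule conjI)

lemma qcomp_gen: "x \<in> A \<Longrightarrow> z \<in> C \<Longrightarrow> y \<in> B \<Longrightarrow> r \<in> R x y \<Longrightarrow> s \<in> S y z
   \<Longrightarrow> s * r \<in> qcomp A dA B C dC S R x z"
proof -
  assume x: "x \<in> A" and z: "z \<in> C" and y: "y \<in> B" and r: "r \<in> R x y" and s: "s \<in> S y z"
  have "s * r \<in> {s * r | s r y. y \<in> B \<and> r \<in> R x y \<and> s \<in> S y z}" using y r s by blast
  then have "s * r \<in> cspan (dC z) (dA x) {s * r | s r y. y \<in> B \<and> r \<in> R x y \<and> s \<in> S y z}"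
    using cspan_inc by (rule subsetD[rotated])
  then show ?thesis unfolding qcomp_eq[OF x z] .
qed

lemma qcomp_subspace:
  assumes "qrel A dA B dB R" "qrel B dB C dC S" "x \<in> A" "z \<in> C"
  shows "is_subspace (dC z) (dA x) (qcomp A dA B C dC S R x z)"
  unfolding qcomp_eq[OF assms(3,4)]
proof (rule cspan_subspace, safe)
  fix s r y assume "y \<in> B" "r \<in> R x y" "s \<in> S y z"
  then show "s * r \<in> carrier_mat (dC z) (dA x)"
  proof -
    assume a: "y \<in> B" "r \<in> R x y" "s \<in> S y z"
    have "r \<in> carrier_mat (dB y) (dA x)" using qrel_carrier[OF assms(1) assms(3) a(1,2)] .
    moreover have "s \<in> carrier_mat (dC z) (dB y)" using qrel_carrier[OF assms(2) a(1) assms(4) a(3)] .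
    ultimately show ?thesis by simp
  qed
qed

lemma qfun_rel: "qfun A dA B dB F \<Longrightarrow> qrel A dA B dB F"
  unfolding qfun_def by (elim conjE)
lemma qfun_le1: "qfun A dA B dB F \<Longrightarrow> qle B B (qcomp B dB A B dB F (qadj F)) (qid B dB)"
  unfolding qfun_def by (elim conjE)
lemma qfun_le2: "qfun A dA B dB F \<Longrightarrow> qle A A (qid A dA) (qcomp A dA B A dA (qadj F) F)"
  unfolding qfun_def by (elim conjE)
lemma qposet_rel: "qposet A d R \<Longrightarrow> qrel A d A d R"
  unfolding qposet_def by (elim conjE)
lemma qposet_refl: "qposet A d R \<Longrightarrow> qle A A (qid A d) R"
  unfolding qposet_def by (elim conjE)
lemma qposet_trans: "qposet A d R \<Longrightarrow> qle A A (qcomp A d A A d R R) R"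
  unfolding qposet_def by (elim conjE)
lemma qposet_anti: "qposet A d R \<Longrightarrow> qle A A (qmeet R (qadj R)) (qid A d)"
  unfolding qposet_def by (elim conjE)
lemma qleD: "qle A B R S \<Longrightarrow> x \<in> A \<Longrightarrow> y \<in> B \<Longrightarrow> m \<in> R x y \<Longrightarrow> m \<in> S x y"
  unfolding qle_def by blast

lemma subspace_smult: "is_subspace n m V \<Longrightarrow> a \<in> V \<Longrightarrow> c \<cdot>\<^sub>m a \<in> V"
  unfolding is_subspace_def by blast
lemma subspace_zero: "is_subspace n m V \<Longrightarrow> 0\<^sub>m n m \<in> V"
  unfolding is_subspace_def by blast

lemma gens_carrier:
  assumes "qrel A dA B dB R" "qrel B dB C dC S" "x \<in> A" "z \<in> C"
  shows "{s * r | s r y. y \<in> B \<and> r \<in> R x y \<and> s \<in> S y z} \<subseteq> carrier_mat (dC z) (dA x)"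
proof safe
  fix s r y assume "y \<in> B" "r \<in> R x y" "s \<in> S y z"
  then show "s * r \<in> carrier_mat (dC z) (dA x)"
  proof -
    assume a: "y \<in> B" "r \<in> R x y" "s \<in> S y z"
    have "r \<in> carrier_mat (dB y) (dA x)" using qrel_carrier[OF assms(1) assms(3) a(1,2)] .
    moreover have "s \<in> carrier_mat (dC z) (dB y)" using qrel_carrier[OF assms(2) a(1) assms(4) a(3)] .
    ultimately show ?thesis by simp
  qed
qed

lemma qid_cases: "M \<in> qid A d y x \<Longrightarrow> (y = x \<and> (\<exists>c. M = c \<cdot>\<^sub>m 1\<^sub>m (d x))) \<or> (y \<noteq> x \<and> M = 0\<^sub>m (d x) (d y))"
  unfolding qid_def by (auto split: if_splits)

lemma one_in_qid: "x \<in> A \<Longrightarrow> 1\<^sub>m (d x) \<in> qid A d x x"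
  unfolding qid_def by (auto intro!: exI[of _ 1])

lemma refl_lemma:
  assumes P: "qposet X dX R" and F: "qfun W dW X dX F"
  shows "qle W X F (qcomp W dW X X dX R F)"
  unfolding qle_def
proof (intro ballI subsetI)
  fix w x f assume w: "w \<in> W" and x: "x \<in> X" and f: "f \<in> F w x"
  have FR: "qrel W dW X dX F" using qfun_rel[OF F] .
  have "1\<^sub>m (dX x) \<in> R x x" using qleD[OF qposet_refl[OF P] x x one_in_qid[OF x]] .
  then have "1\<^sub>m (dX x) * f \<in> qcomp W dW X X dX R F w x" using qcomp_gen w x f by metis
  moreover have "1\<^sub>m (dX x) * f = f" using qrel_carrier[OF FR w x f] by simp
  ultimately show "f \<in> qcomp W dW X X dX R F w x" by simp
qed

lemma trans_lemma:
  assumes P: "qposet X dX R" and F: "qfun W dW X dX F" and G: "qfun W dW X dX G"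
    and GF: "qle W X G (qcomp W dW X X dX R F)" and HG: "qle W X H (qcomp W dW X X dX R G)"
  shows "qle W X H (qcomp W dW X X dX R F)"
  unfolding qle_def
proof (intro ballI subsetI)
  fix w x h assume w: "w \<in> W" and x: "x \<in> X" and h: "h \<in> H w x"
  have FR: "qrel W dW X dX F" using qfun_rel[OF F] .
  have GR: "qrel W dW X dX G" using qfun_rel[OF G] .
  have RR: "qrel X dX X dX R" using qposet_rel[OF P] .
  have RRR: "\<And>a b. a \<in> X \<Longrightarrow> b \<in> X \<Longrightarrow> qcomp X dX X X dX R R a b \<subseteq> R a b"
    using qposet_trans[OF P] unfolding qle_def by blast
  let ?V = "qcomp W dW X X dX R F w x"
  have V: "is_subspace (dX x) (dW w) ?V" using qcomp_subspace[OF FR RR w x] .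
  have hin: "h \<in> qcomp W dW X X dX R G w x" using HG w x h unfolding qle_def by blast
  have "qcomp W dW X X dX R G w x \<subseteq> ?V"
    unfolding qcomp_eq[OF w x, of dW X dX R G]
  proof (rule cspan_least[OF V], safe)
    fix s r z assume z: "z \<in> X" and r: "r \<in> G w z" and s: "s \<in> R z x"
    have sC: "s \<in> carrier_mat (dX x) (dX z)" using qrel_carrier[OF RR z x s] .
    have rin: "r \<in> cspan (dX z) (dW w) {s' * r' | s' r' y. y \<in> X \<and> r' \<in> F w y \<and> s' \<in> R y z}"
      using GF w z r qcomp_eq[OF w z, of dW X dX R F] unfolding qle_def by blast
    show "s * r \<in> ?V"
    proof (rule left_mult_span[OF sC V _ _ rin])
      show "{s' * r' | s' r' y. y \<in> X \<and> r' \<in> F w y \<and> s' \<in> R y z} \<subseteq> carrier_mat (dX z) (dW w)"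
        by (rule gens_carrier[OF FR RR w z])
    next
      fix q assume "q \<in> {s' * r' | s' r' y. y \<in> X \<and> r' \<in> F w y \<and> s' \<in> R y z}"
      then obtain s' r' y where q: "q = s' * r'" and y: "y \<in> X" and r': "r' \<in> F w y" and s': "s' \<in> R y z" by blast
      have r'C: "r' \<in> carrier_mat (dX y) (dW w)" using qrel_carrier[OF FR w y r'] .
      have s'C: "s' \<in> carrier_mat (dX z) (dX y)" using qrel_carrier[OF RR y z s'] .
      have "s * s' \<in> qcomp X dX X X dX R R y x" using qcomp_gen[of y X x X z X s' R s R dX dX, OF y x z s' s] .
      then have ss: "s * s' \<in> R y x" using RRR[OF y x] by blast
      have "s * q = (s * s') * r'" using q sC s'C r'C by simp
      then show "s * q \<in> ?V" using qcomp_gen[of w W x X y X r' F "s * s'" R dW dX, OF w x y r' ss] by simp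
    qed
  qed
  then show "h \<in> ?V" using hin by blast
qed


lemma stepA:
  assumes P: "qposet X dX R" and F: "qfun W dW X dX F" and G: "qfun W dW X dX G"
    and GF: "qle W X G (qcomp W dW X X dX R F)"
    and w: "w \<in> W" and x: "x \<in> X" and y: "y \<in> X" and g: "g \<in> G w x" and f: "f \<in> F w y"
  shows "g * adj f \<in> R y x"
proof -
  have FR: "qrel W dW X dX F" using qfun_rel[OF F] .
  have RR: "qrel X dX X dX R" using qposet_rel[OF P] .
  have FF: "\<And>a b. a \<in> X \<Longrightarrow> b \<in> X \<Longrightarrow> qcomp X dX W X dX F (qadj F) a b \<subseteq> qid X dX a b"
    using qfun_le1[OF F] unfolding qle_def by blast
  have V: "is_subspace (dX x) (dX y) (R y x)" using qrel_sub[OF RR y x] .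
  have fC: "f \<in> carrier_mat (dX y) (dW w)" using qrel_carrier[OF FR w y f] .
  have aC: "adj f \<in> carrier_mat (dW w) (dX y)" using adj_carrier[OF fC] .
  have gin0: "g \<in> qcomp W dW X X dX R F w x" using qleD[OF GF w x g] .
  have gin: "g \<in> cspan (dX x) (dW w) {s * r | s r z. z \<in> X \<and> r \<in> F w z \<and> s \<in> R z x}"
    using gin0 unfolding qcomp_eq[OF w x] .
  show ?thesis
  proof (rule right_mult_span[OF aC V _ _ gin])
    show "{s * r | s r z. z \<in> X \<and> r \<in> F w z \<and> s \<in> R z x} \<subseteq> carrier_mat (dX x) (dW w)"
      by (rule gens_carrier[OF FR RR w x])
  next
    fix q assume "q \<in> {s * r | s r z. z \<in> X \<and> r \<in> F w z \<and> s \<in> R z x}"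
    then obtain s r z where q: "q = s * r" and z: "z \<in> X" and r: "r \<in> F w z" and s: "s \<in> R z x" by blast
    have rC: "r \<in> carrier_mat (dX z) (dW w)" using qrel_carrier[OF FR w z r] .
    have sC: "s \<in> carrier_mat (dX x) (dX z)" using qrel_carrier[OF RR z x s] .
    have af: "adj f \<in> qadj F y w" using f unfolding qadj_def by (rule imageI)
    have "r * adj f \<in> qcomp X dX W X dX F (qadj F) y z"
      using qcomp_gen[of y X z X w W "adj f" "qadj F" r F dX dX, OF y z w af r] .
    then have "r * adj f \<in> qid X dX y z" by (rule qleD[OF qfun_le1[OF F] y z])
    then have cases: "(y = z \<and> (\<exists>c. r * adj f = c \<cdot>\<^sub>m 1\<^sub>m (dX z))) \<or> (y \<noteq> z \<and> r * adj f = 0\<^sub>m (dX z) (dX y))"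
      by (rule qid_cases)
    have eq: "q * adj f = s * (r * adj f)" using q sC rC aC by simp
    show "q * adj f \<in> R y x"
    proof (cases "y = z")
      case True
      then obtain c where c: "r * adj f = c \<cdot>\<^sub>m 1\<^sub>m (dX z)" using cases by blast
      have "s * (c \<cdot>\<^sub>m 1\<^sub>m (dX z)) = c \<cdot>\<^sub>m (s * 1\<^sub>m (dX z))"
        by (rule mult_smult_distrib[OF sC one_carrier_mat])
      also have "s * 1\<^sub>m (dX z) = s" by (rule right_mult_one_mat[OF sC])
      finally have e2: "q * adj f = c \<cdot>\<^sub>m s" using eq c by simp
      have "c \<cdot>\<^sub>m s \<in> R z x" by (rule subspace_smult[OF qrel_sub[OF RR z x] s])
      then show ?thesis using e2 True by simp
    next
      case False
      then have "r * adj f = 0\<^sub>m (dX z) (dX y)" using cases by blast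
      then have "q * adj f = 0\<^sub>m (dX x) (dX y)" using eq right_mult_zero_mat[OF sC] by simp
      then show ?thesis using subspace_zero[OF V] by simp
    qed
  qed
qed

lemma stepB:
  assumes P: "qposet X dX R" and F: "qfun W dW X dX F" and G: "qfun W dW X dX G"
    and GF: "qle W X G (qcomp W dW X X dX R F)" and FG: "qle W X F (qcomp W dW X X dX R G)"
    and w: "w \<in> W" and x: "x \<in> X" and y: "y \<in> X" and g: "g \<in> G w x" and f: "f \<in> F w y"
  shows "g * adj f \<in> qid X dX y x"
proof -
  have FR: "qrel W dW X dX F" using qfun_rel[OF F] .
  have GR: "qrel W dW X dX G" using qfun_rel[OF G] .
  have fC: "f \<in> carrier_mat (dX y) (dW w)" using qrel_carrier[OF FR w y f] .
  have gC: "g \<in> carrier_mat (dX x) (dW w)" using qrel_carrier[OF GR w x g] .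
  have 1: "g * adj f \<in> R y x" using stepA[OF P F G GF w x y g f] .
  have 2: "f * adj g \<in> R x y" using stepA[OF P G F FG w y x f g] .
  have "adj (f * adj g) = g * adj f"
    using adj_mult[OF fC adj_carrier[OF gC]] adj_adj by simp
  then have "g * adj f \<in> qadj R y x" using 2 unfolding qadj_def by (metis image_eqI)
  then have "g * adj f \<in> qmeet R (qadj R) y x" using 1 unfolding qmeet_def by blast
  then show ?thesis using qleD[OF qposet_anti[OF P] y x] by blast
qed

lemma stepC:
  assumes F: "qfun W dW X dX F" and G: "qfun W dW X dX G"
    and H: "\<And>w x y g f. w \<in> W \<Longrightarrow> x \<in> X \<Longrightarrow> y \<in> X \<Longrightarrow> g \<in> G w x \<Longrightarrow> f \<in> F w y
       \<Longrightarrow> g * adj f \<in> qid X dX y x"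
  shows "qle W X G F"
  unfolding qle_def
proof (intro ballI subsetI)
  fix w x g assume w: "w \<in> W" and x: "x \<in> X" and g: "g \<in> G w x"
  have FR: "qrel W dW X dX F" using qfun_rel[OF F] .
  have GR: "qrel W dW X dX G" using qfun_rel[OF G] .
  have gC: "g \<in> carrier_mat (dX x) (dW w)" using qrel_carrier[OF GR w x g] .
  have V: "is_subspace (dX x) (dW w) (F w x)" using qrel_sub[OF FR w x] .
  have "1\<^sub>m (dW w) \<in> qcomp W dW X W dW (qadj F) F w w"
    using qleD[OF qfun_le2[OF F] w w one_in_qid[OF w]] .
  then have one: "1\<^sub>m (dW w) \<in> cspan (dW w) (dW w) {s * r | s r y. y \<in> X \<and> r \<in> F w y \<and> s \<in> qadj F y w}"
    by (simp only: qcomp_eq[OF w w])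
  have "g * 1\<^sub>m (dW w) \<in> F w x"
  proof (rule left_mult_span[OF gC V _ _ one])
    show "{s * r | s r y. y \<in> X \<and> r \<in> F w y \<and> s \<in> qadj F y w} \<subseteq> carrier_mat (dW w) (dW w)"
    proof safe
      fix s r y assume y: "y \<in> X" and r: "r \<in> F w y" and s: "s \<in> qadj F y w"
      then obtain f where f: "f \<in> F w y" and sf: "s = adj f" unfolding qadj_def by blast
      show "s * r \<in> carrier_mat (dW w) (dW w)"
        using sf adj_carrier[OF qrel_carrier[OF FR w y f]] qrel_carrier[OF FR w y r] by simp
    qed
  next
    fix q assume "q \<in> {s * r | s r y. y \<in> X \<and> r \<in> F w y \<and> s \<in> qadj F y w}"
    then obtain s r y where q0: "q = s * r" and y: "y \<in> X" and r: "r \<in> F w y" and s: "s \<in> qadj F y w"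
      by blast
    from s obtain f where f: "f \<in> F w y" and sf: "s = adj f" unfolding qadj_def by blast
    have q: "q = adj f * r" using q0 sf by simp
    have rC: "r \<in> carrier_mat (dX y) (dW w)" using qrel_carrier[OF FR w y r] .
    have fC: "f \<in> carrier_mat (dX y) (dW w)" using qrel_carrier[OF FR w y f] .
    have aC: "adj f \<in> carrier_mat (dW w) (dX y)" using adj_carrier[OF fC] .
    have eq: "g * q = (g * adj f) * r" using q gC aC rC by simp
    have cases: "(y = x \<and> (\<exists>c. g * adj f = c \<cdot>\<^sub>m 1\<^sub>m (dX x))) \<or> (y \<noteq> x \<and> g * adj f = 0\<^sub>m (dX x) (dX y))"
      by (rule qid_cases[OF H[OF w x y g f]])
    show "g * q \<in> F w x"
    proof (cases "y = x")
      case True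
      then obtain c where c: "g * adj f = c \<cdot>\<^sub>m 1\<^sub>m (dX x)" using cases by blast
      have rC': "r \<in> carrier_mat (dX x) (dW w)" using rC True by simp
      have "(c \<cdot>\<^sub>m 1\<^sub>m (dX x)) * r = c \<cdot>\<^sub>m (1\<^sub>m (dX x) * r)"
        by (rule mult_smult_assoc_mat[OF one_carrier_mat rC'])
      also have "1\<^sub>m (dX x) * r = r" by (rule left_mult_one_mat[OF rC'])
      finally have e2: "g * q = c \<cdot>\<^sub>m r" using eq c by simp
      have r': "r \<in> F w x" using r True by simp
      show ?thesis unfolding e2 by (rule subspace_smult[OF V r'])
    next
      case False
      then have "g * adj f = 0\<^sub>m (dX x) (dX y)" using cases by blast
      then have "g * q = 0\<^sub>m (dX x) (dW w)" using eq left_mult_zero_mat[OF rC] by simp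
      then show ?thesis using subspace_zero[OF V] by simp
    qed
  qed
  then show "g \<in> F w x" using right_mult_one_mat[OF gC] by simp
qed

theorem mainTheorem1:
  fixes X :: "'x set" and dX :: "'x \<Rightarrow> nat" and R :: "'x \<Rightarrow> 'x \<Rightarrow> complex mat set"
    and W :: "'w set" and dW :: "'w \<Rightarrow> nat"
  assumes "qposet X dX R"
    and "qset W dW"
  shows "partial_order_on (qfuns W dW X dX) (fun_order W dW X dX R)"
  unfolding partial_order_on_def preorder_on_def
proof (intro conjI)
  note P = assms(1)
  show "fun_order W dW X dX R \<subseteq> qfuns W dW X dX \<times> qfuns W dW X dX"
    unfolding fun_order_def by blast
  show "refl_on (qfuns W dW X dX) (fun_order W dW X dX R)"
    unfolding refl_on_def fun_order_def qfuns_def using refl_lemma[OF P] by blast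
  show "trans (fun_order W dW X dX R)"
    unfolding trans_def fun_order_def qfuns_def using trans_lemma[OF P] by blast
  show "antisym (fun_order W dW X dX R)"
    unfolding antisym_def
  proof (intro allI impI)
    fix F G assume a: "(F, G) \<in> fun_order W dW X dX R" and b: "(G, F) \<in> fun_order W dW X dX R"
    have F: "qfun W dW X dX F" and G: "qfun W dW X dX G"
      and GF: "qle W X G (qcomp W dW X X dX R F)" and FG: "qle W X F (qcomp W dW X X dX R G)"
      using a b unfolding fun_order_def qfuns_def by auto
    have 1: "qle W X G F" by (rule stepC[OF F G]) (rule stepB[OF P F G GF FG])
    have 2: "qle W X F G" by (rule stepC[OF G F]) (rule stepB[OF P G F FG GF])
    have FR: "qrel W dW X dX F" using qfun_rel[OF F] .
    have GR: "qrel W dW X dX G" using qfun_rel[OF G] .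
    show "F = G"
    proof (intro ext)
      fix w x show "F w x = G w x"
      proof (cases "w \<in> W \<and> x \<in> X")
        case True then show ?thesis using 1 2 unfolding qle_def by blast
      next
        case False then show ?thesis using FR GR unfolding qrel_def by blast
      qed
    qed
  qed
qed

end
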